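(* Let $1\le t\le n$, write $n=at+b$ with $a\ge1$ and $0\le b<t$, and let $\mathfrak p=(x_{i_1},\ldots,x_{i_a})$ with $1\le i_1<\cdots<i_a\le n$. Then $\mathfrak p\in\mathrm{Ass}(S/I_t(L_n))$ if and only if (1) $(j-1)t+b+1\le i_j\le jt$ for all $1\le j\le a$, and (2) $i_{j+1}-i_j\le t$ for all $1\le j\le a-1$.
   Context: $K$ is a field, $S=K[x_1,\ldots,x_n]$, $I_t(L_n)=(u_1,\ldots,u_{n-t+1})$ with $u_i=x_ix_{i+1}\cdots x_{i+t-1}$. *)

theory Defs
  imports Main "HOL-Library.Poly_Mapping"
begin

text \<open>Polynomials over a field K in variables x_1, x_2, ...: a polynomial is a finitely
supported map from monomials (finitely supported exponent vectors) to coefficients.\<close>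
type_synonym 'a mpoly = "(nat \<Rightarrow>\<^sub>0 nat) \<Rightarrow>\<^sub>0 'a"

definition polyS :: "nat \<Rightarrow> 'a::field mpoly set" where
  "polyS n = {p. \<forall>m \<in> Poly_Mapping.keys p. Poly_Mapping.keys m \<subseteq> {1..n}}"

definition var :: "nat \<Rightarrow> 'a::field mpoly" where
  "var i = Poly_Mapping.single (Poly_Mapping.single i 1) 1"

definition is_ideal :: "nat \<Rightarrow> 'a::field mpoly set \<Rightarrow> bool" where
  "is_ideal n J \<longleftrightarrow> J \<subseteq> polyS n \<and> 0 \<in> J \<and> (\<forall>p\<in>J. \<forall>q\<in>J. p + q \<in> J)
     \<and> (\<forall>r\<in>polyS n. \<forall>p\<in>J. r * p \<in> J)"

definition ideal_gen :: "nat \<Rightarrow> 'a::field mpoly set \<Rightarrow> 'a mpoly set" where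
  "ideal_gen n G = \<Inter>{J. is_ideal n J \<and> G \<subseteq> J}"

definition is_prime_ideal :: "nat \<Rightarrow> 'a::field mpoly set \<Rightarrow> bool" where
  "is_prime_ideal n P \<longleftrightarrow> is_ideal n P \<and> P \<noteq> polyS n
     \<and> (\<forall>a\<in>polyS n. \<forall>b\<in>polyS n. a * b \<in> P \<longrightarrow> a \<in> P \<or> b \<in> P)"

definition Ass :: "nat \<Rightarrow> 'a::field mpoly set \<Rightarrow> 'a mpoly set set" where
  "Ass n I = {P. is_prime_ideal n P \<and> (\<exists>f\<in>polyS n. P = {g \<in> polyS n. g * f \<in> I})}"

definition path_ideal :: "nat \<Rightarrow> nat \<Rightarrow> 'a::field mpoly set" where
  "path_ideal n t = ideal_gen n ((\<lambda>i. \<Prod>k\<in>{i..i+t-1}. var k) ` {1..n-t+1})"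

end

theory Submission
  imports Defs
begin

definition sqm :: "nat set \<Rightarrow> (nat \<Rightarrow>\<^sub>0 nat)" where
  "sqm W = (\<Sum>l\<in>W. Poly_Mapping.single l 1)"

lemma lookup_sqm: "finite W \<Longrightarrow> Poly_Mapping.lookup (sqm W) l = (if l \<in> W then 1 else 0)"
  by (simp add: sqm_def lookup_sum lookup_single when_def)

lemma keys_sqm: "finite W \<Longrightarrow> Poly_Mapping.keys (sqm W) = W"
  by (auto simp: in_keys_iff lookup_sqm split: if_splits)

lemma keys_add_nat: "Poly_Mapping.keys ((m1::'k \<Rightarrow>\<^sub>0 nat) + m2) = Poly_Mapping.keys m1 \<union> Poly_Mapping.keys m2"
  by (auto simp: in_keys_iff lookup_add)

lemma prod_var: "finite W \<Longrightarrow> (\<Prod>k\<in>W. var k) = (Poly_Mapping.single (sqm W) 1 :: 'a::field mpoly)"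
proof (induction W rule: finite_induct)
  case empty
  then show ?case by (simp add: sqm_def)
next
  case (insert x F)
  then show ?case by (simp add: var_def mult_single sqm_def)
qed

lemma expand: "p = (\<Sum>m\<in>Poly_Mapping.keys p. Poly_Mapping.single m (Poly_Mapping.lookup p m))"
  by (rule poly_mapping_eqI) (simp add: lookup_sum lookup_single when_def in_keys_iff)

lemma expand': "(\<Sum>m\<in>Poly_Mapping.keys p. Poly_Mapping.single m (Poly_Mapping.lookup p m)) = p"
  by (rule expand[symmetric])

lemma lookup_mult_single: "Poly_Mapping.lookup (g * Poly_Mapping.single F (c::'a::comm_semiring_1)) (m + (F::'k::cancel_comm_monoid_add)) = Poly_Mapping.lookup g m * c"
proof -
  have "g * Poly_Mapping.single F c = (\<Sum>x\<in>Poly_Mapping.keys g. Poly_Mapping.single x (Poly_Mapping.lookup g x)) * Poly_Mapping.single F c"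
    by (subst expand) simp
  also have "\<dots> = (\<Sum>x\<in>Poly_Mapping.keys g. Poly_Mapping.single (x + F) (Poly_Mapping.lookup g x * c))"
    by (simp add: sum_distrib_right mult_single)
  finally show ?thesis
    by (simp add: lookup_sum lookup_single when_def in_keys_iff)
qed


lemma polyS_add: assumes "p \<in> polyS n" "q \<in> polyS n" shows "p + q \<in> polyS n"
proof -
  have "\<forall>m\<in>Poly_Mapping.keys (p+q). Poly_Mapping.keys m \<subseteq> {1..n}"
  proof
    fix m assume "m \<in> Poly_Mapping.keys (p+q)"
    then have "m \<in> Poly_Mapping.keys p \<or> m \<in> Poly_Mapping.keys q" using keys_add[of p q] by auto
    then show "Poly_Mapping.keys m \<subseteq> {1..n}" using assms unfolding polyS_def by auto
  qed
  then show ?thesis unfolding polyS_def by simp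
qed

lemma polyS_mult: assumes "p \<in> polyS n" "q \<in> polyS n" shows "p * q \<in> polyS n"
proof -
  have "\<forall>m\<in>Poly_Mapping.keys (p*q). Poly_Mapping.keys m \<subseteq> {1..n}"
  proof
    fix m assume "m \<in> Poly_Mapping.keys (p*q)"
    then obtain x y where "m = x + y" "x \<in> Poly_Mapping.keys p" "y \<in> Poly_Mapping.keys q"
      using keys_mult[of p q] by auto
    then show "Poly_Mapping.keys m \<subseteq> {1..n}" using assms unfolding polyS_def by (auto simp: keys_add_nat)
  qed
  then show ?thesis unfolding polyS_def by simp
qed

lemma polyS_single: "Poly_Mapping.keys m \<subseteq> {1..n} \<Longrightarrow> (Poly_Mapping.single m c :: 'a::field mpoly) \<in> polyS n"
  unfolding polyS_def by auto

lemma keys_uminus': "Poly_Mapping.keys (- (p::'k \<Rightarrow>\<^sub>0 'b::ab_group_add)) = Poly_Mapping.keys p"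
  by (auto simp: in_keys_iff)

lemma polyS_uminus: "p \<in> polyS n \<Longrightarrow> - p \<in> polyS n"
  unfolding polyS_def by (simp add: keys_uminus')

lemma polyS_one: "(1::'a::field mpoly) \<in> polyS n"
  unfolding polyS_def by simp

lemma ideal_sum: assumes "is_ideal n K" "finite A" "\<forall>x\<in>A. f x \<in> K" shows "sum f A \<in> K"
  using assms(2,3) by (induction A rule: finite_induct) (use assms(1) in \<open>auto simp: is_ideal_def\<close>)

lemma ideal_uminus: "is_ideal n K \<Longrightarrow> p \<in> K \<Longrightarrow> - p \<in> K"
proof -
  assume K: "is_ideal n K" and p: "p \<in> K"
  have "(- 1) * p \<in> K" using K p polyS_uminus[OF polyS_one] unfolding is_ideal_def by blast
  then show ?thesis by simp
qed

definition HJ :: "nat \<Rightarrow> nat set set \<Rightarrow> 'a::field mpoly set" where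
  "HJ n WW = {p \<in> polyS n. \<forall>m\<in>Poly_Mapping.keys p. \<exists>W\<in>WW. W \<subseteq> Poly_Mapping.keys m}"

lemma HJ_ideal: "is_ideal n (HJ n WW :: 'a::field mpoly set)"
  unfolding is_ideal_def
proof (intro conjI ballI)
  show "HJ n WW \<subseteq> polyS n" by (auto simp: HJ_def)
  show "0 \<in> HJ n WW" by (auto simp: HJ_def polyS_def)
  fix p q :: "'a mpoly" assume p: "p \<in> HJ n WW" and q: "q \<in> HJ n WW"
  have "p + q \<in> polyS n" using p q by (intro polyS_add) (auto simp: HJ_def)
  moreover have "\<exists>W\<in>WW. W \<subseteq> Poly_Mapping.keys m" if mk: "m \<in> Poly_Mapping.keys (p + q)" for m
  proof -
    from mk have "m \<in> Poly_Mapping.keys p \<or> m \<in> Poly_Mapping.keys q" using keys_add[of p q] by auto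
    then show ?thesis using p q unfolding HJ_def by auto
  qed
  ultimately show "p + q \<in> HJ n WW" by (simp add: HJ_def)
next
  fix r p :: "'a mpoly" assume r: "r \<in> polyS n" and p: "p \<in> HJ n WW"
  have "r * p \<in> polyS n" using r p polyS_mult by (auto simp: HJ_def)
  moreover have "\<exists>W\<in>WW. W \<subseteq> Poly_Mapping.keys m" if mk: "m \<in> Poly_Mapping.keys (r * p)" for m
  proof -
    obtain x y where xy: "m = x + y" "y \<in> Poly_Mapping.keys p" using keys_mult[of r p] mk by force
    obtain W where "W \<in> WW" "W \<subseteq> Poly_Mapping.keys y" using p xy(2) unfolding HJ_def by auto
    then show ?thesis using xy(1) by (auto simp: keys_add_nat)
  qed
  ultimately show "r * p \<in> HJ n WW" by (simp add: HJ_def)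
qed

lemma gens_in_HJ:
  assumes "\<forall>W\<in>WW. finite W \<and> W \<subseteq> {1..n}"
  shows "(\<lambda>W. Poly_Mapping.single (sqm W) (1::'a::field)) ` WW \<subseteq> HJ n WW"
proof
  fix u assume "u \<in> (\<lambda>W. Poly_Mapping.single (sqm W) (1::'a::field)) ` WW"
  then obtain W where W: "W \<in> WW" "u = Poly_Mapping.single (sqm W) 1" by blast
  have fW': "finite W \<and> W \<subseteq> {1..n}" using assms W(1) by (rule bspec)
  have fW: "finite W" "W \<subseteq> {1..n}" using fW' by (rule conjunct1, rule conjunct2)
  have "u \<in> polyS n" unfolding W(2) by (rule polyS_single) (subst keys_sqm[OF fW(1)], rule fW(2))
  moreover have "\<forall>m\<in>Poly_Mapping.keys u. \<exists>W'\<in>WW. W' \<subseteq> Poly_Mapping.keys m"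
    unfolding W(2) by (simp add: keys_sqm[OF fW(1)]) (use W(1) in blast)
  ultimately show "u \<in> HJ n WW" unfolding HJ_def by blast
qed

lemma HJ_sub:
  assumes WW: "\<forall>W\<in>WW. finite W \<and> W \<subseteq> {1..n}"
    and K: "is_ideal n K" and G: "(\<lambda>W. Poly_Mapping.single (sqm W) (1::'a::field)) ` WW \<subseteq> K"
  shows "HJ n WW \<subseteq> K"
proof
  fix p :: "'a mpoly" assume p: "p \<in> HJ n WW"
  have "Poly_Mapping.single m (Poly_Mapping.lookup p m) \<in> K" if m: "m \<in> Poly_Mapping.keys p" for m
  proof -
    obtain W where W: "W \<in> WW" "W \<subseteq> Poly_Mapping.keys m" using p m by (auto simp: HJ_def)
    have fW: "finite W" using W WW by auto
    have km: "Poly_Mapping.keys m \<subseteq> {1..n}" using p m by (auto simp: HJ_def polyS_def)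
    have eq: "m = (m - sqm W) + sqm W"
    proof (rule poly_mapping_eqI)
      fix l
      show "Poly_Mapping.lookup m l = Poly_Mapping.lookup (m - sqm W + sqm W) l"
        using W(2) fW by (auto simp: lookup_add lookup_minus lookup_sqm in_keys_iff)
    qed
    have "Poly_Mapping.keys (m - sqm W) \<subseteq> Poly_Mapping.keys m"
      by (auto simp: in_keys_iff lookup_minus)
    then have "Poly_Mapping.single (m - sqm W) (Poly_Mapping.lookup p m) \<in> polyS n"
      using km by (intro polyS_single) auto
    moreover have "Poly_Mapping.single (sqm W) 1 \<in> K" using G W by auto
    ultimately have "Poly_Mapping.single (m - sqm W) (Poly_Mapping.lookup p m) * Poly_Mapping.single (sqm W) 1 \<in> K"
      using K unfolding is_ideal_def by blast
    then show ?thesis using eq by (simp add: mult_single)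
  qed
  then have "(\<Sum>m\<in>Poly_Mapping.keys p. Poly_Mapping.single m (Poly_Mapping.lookup p m)) \<in> K"
    by (intro ideal_sum[OF K]) auto
  then show "p \<in> K" by (simp only: expand')
qed

lemma ideal_char:
  assumes WW: "\<forall>W\<in>WW. finite W \<and> W \<subseteq> {1..n}"
  shows "ideal_gen n ((\<lambda>W. Poly_Mapping.single (sqm W) (1::'a::field)) ` WW) = HJ n WW"
proof
  show "ideal_gen n ((\<lambda>W. Poly_Mapping.single (sqm W) (1::'a::field)) ` WW) \<subseteq> HJ n WW"
    unfolding ideal_gen_def by (rule Inter_lower) (simp add: HJ_ideal gens_in_HJ[OF WW])
  show "HJ n WW \<subseteq> ideal_gen n ((\<lambda>W. Poly_Mapping.single (sqm W) (1::'a::field)) ` WW)"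
    unfolding ideal_gen_def by (rule Inter_greatest) (use HJ_sub[OF WW] in blast)
qed

lemma gens_in_ideal_gen: "G \<subseteq> ideal_gen n G"
  unfolding ideal_gen_def by blast


definition restr :: "('k \<Rightarrow> bool) \<Rightarrow> ('k \<Rightarrow>\<^sub>0 'b::zero) \<Rightarrow> ('k \<Rightarrow>\<^sub>0 'b)" where
  "restr Q p = Abs_poly_mapping (\<lambda>k. if Q k then Poly_Mapping.lookup p k else 0)"

lemma restr_fin: "{k. (if Q k then Poly_Mapping.lookup p k else 0) \<noteq> 0} \<subseteq> Poly_Mapping.keys p"
  apply (rule subsetI)
  apply (simp only: mem_Collect_eq in_keys_iff)
  apply (simp split: if_splits)
  done

lemma lookup_restr: "Poly_Mapping.lookup (restr Q p) k = (if Q k then Poly_Mapping.lookup p k else 0)"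
proof -
  have "finite {k. (if Q k then Poly_Mapping.lookup p k else 0) \<noteq> 0}"
    by (rule finite_subset[OF restr_fin finite_keys[of p]])
  then show ?thesis unfolding restr_def by (simp add: lookup_Abs_poly_mapping)
qed

lemma keys_restr: "Poly_Mapping.keys (restr Q p) \<subseteq> Poly_Mapping.keys p"
  apply (rule subsetI)
  apply (simp only: in_keys_iff lookup_restr)
  apply (simp split: if_splits)
  done

lemma keys_restr_Q: "m \<in> Poly_Mapping.keys (restr Q p) \<Longrightarrow> Q m"
  apply (simp only: in_keys_iff lookup_restr)
  apply (simp split: if_splits)
  done

lemma keys_restr_diff: "m \<in> Poly_Mapping.keys (p - restr Q (p::'k \<Rightarrow>\<^sub>0 'b::ab_group_add)) \<Longrightarrow> m \<in> Poly_Mapping.keys p \<and> \<not> Q m"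
  apply (simp only: in_keys_iff lookup_restr lookup_minus)
  apply (simp split: if_splits)
  done

lemma polyS_sub: assumes "p \<in> polyS n" "Poly_Mapping.keys q \<subseteq> Poly_Mapping.keys p" shows "q \<in> polyS n"
proof -
  have "\<forall>m\<in>Poly_Mapping.keys q. Poly_Mapping.keys m \<subseteq> {1..n}"
  proof
    fix m assume "m \<in> Poly_Mapping.keys q"
    then have "m \<in> Poly_Mapping.keys p" using assms(2) by (rule subsetD[rotated])
    then show "Poly_Mapping.keys m \<subseteq> {1..n}" using assms(1) unfolding polyS_def by simp
  qed
  then show ?thesis unfolding polyS_def by simp
qed

lemma HJ_single: "HJ n ((\<lambda>v. {v}) ` V) = {p \<in> polyS n. \<forall>m\<in>Poly_Mapping.keys p. Poly_Mapping.keys m \<inter> V \<noteq> {}}"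
  by (auto simp: HJ_def)

lemma prime_HJ:
  fixes V :: "nat set"
  shows "is_prime_ideal n (HJ n ((\<lambda>v. {v}) ` V) :: 'a::field mpoly set)"
proof -
  define P where "P = (HJ n ((\<lambda>v. {v}) ` V) :: 'a mpoly set)"
  have Pc: "P = {p \<in> polyS n. \<forall>m\<in>Poly_Mapping.keys p. Poly_Mapping.keys m \<inter> V \<noteq> {}}"
    unfolding P_def by (rule HJ_single)
  have PI: "is_ideal n P" unfolding P_def by (rule HJ_ideal)
  have ne: "P \<noteq> polyS n"
  proof
    assume "P = polyS n"
    then have "(1::'a mpoly) \<in> P" using polyS_one by blast
    then show False by (simp add: Pc)
  qed
  define Q where "Q = (\<lambda>m::nat \<Rightarrow>\<^sub>0 nat. Poly_Mapping.keys m \<inter> V = {})"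
  have split: "restr Q p \<in> polyS n \<and> p - restr Q p \<in> P
       \<and> (\<forall>m\<in>Poly_Mapping.keys (restr Q p). Q m)" if p: "p \<in> polyS n" for p :: "'a mpoly"
  proof (intro conjI)
    have k0: "Poly_Mapping.keys (restr Q p) \<subseteq> Poly_Mapping.keys p"
      by (rule keys_restr)
    show "restr Q p \<in> polyS n" using p k0 by (rule polyS_sub)
    show "\<forall>m\<in>Poly_Mapping.keys (restr Q p). Q m"
    proof
      fix m assume "m \<in> Poly_Mapping.keys (restr Q p)"
      then show "Q m" by (rule keys_restr_Q)
    qed
    have k1: "Poly_Mapping.keys (p - restr Q p) \<subseteq> Poly_Mapping.keys p \<inter> {m. \<not> Q m}"
    proof
      fix m assume "m \<in> Poly_Mapping.keys (p - restr Q p)"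
      then have "m \<in> Poly_Mapping.keys p \<and> \<not> Q m" by (rule keys_restr_diff)
      then show "m \<in> Poly_Mapping.keys p \<inter> {m. \<not> Q m}" by simp
    qed
    show "p - restr Q p \<in> P" unfolding Pc
    proof (intro CollectI conjI ballI)
      have "Poly_Mapping.keys (p - restr Q p) \<subseteq> Poly_Mapping.keys p" using k1 by blast
      with p show "p - restr Q p \<in> polyS n" by (rule polyS_sub)
      fix m assume "m \<in> Poly_Mapping.keys (p - restr Q p)"
      then have "\<not> Q m" using k1 by blast
      then show "Poly_Mapping.keys m \<inter> V \<noteq> {}" unfolding Q_def by simp
    qed
  qed
  have prime: "a \<in> P \<or> b \<in> P" if a: "a \<in> polyS n" and b: "b \<in> polyS n" and ab: "a * b \<in> P" for a b :: "'a mpoly"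
  proof -
    define a0 where "a0 = restr Q a"
    define b0 where "b0 = restr Q b"
    define a1 where "a1 = a - a0"
    define b1 where "b1 = b - b0"
    have a0: "a0 \<in> polyS n" "a1 \<in> P" "\<forall>m\<in>Poly_Mapping.keys a0. Q m"
      using split[OF a] unfolding a0_def a1_def by auto
    have b0: "b0 \<in> polyS n" "b1 \<in> P" "\<forall>m\<in>Poly_Mapping.keys b0. Q m"
      using split[OF b] unfolding b0_def b1_def by auto
    have eq: "a0 * b0 = a * b + - (a0 * b1 + b * a1)"
      unfolding a1_def b1_def by (simp add: algebra_simps)
    have "a0 * b1 \<in> P" using PI a0(1) b0(2) unfolding is_ideal_def by blast
    moreover have "b * a1 \<in> P" using PI b a0(2) unfolding is_ideal_def by blast
    ultimately have "a0 * b1 + b * a1 \<in> P" using PI unfolding is_ideal_def by blast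
    then have "- (a0 * b1 + b * a1) \<in> P" using ideal_uminus[OF PI] by blast
    then have "a * b + - (a0 * b1 + b * a1) \<in> P" using ab PI unfolding is_ideal_def by blast
    then have "a0 * b0 \<in> P" by (subst eq)
    then have hit: "\<forall>m\<in>Poly_Mapping.keys (a0 * b0). \<not> Q m" unfolding Pc Q_def by blast
    have nohit: "\<forall>m\<in>Poly_Mapping.keys (a0 * b0). Q m"
    proof
      fix m assume "m \<in> Poly_Mapping.keys (a0 * b0)"
      then obtain x y where "m = x + y" "x \<in> Poly_Mapping.keys a0" "y \<in> Poly_Mapping.keys b0"
        using keys_mult[of a0 b0] by auto
      then show "Q m" using a0(3) b0(3) unfolding Q_def by (auto simp: keys_add_nat)
    qed
    have "Poly_Mapping.keys (a0 * b0) = {}" using hit nohit by blast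
    then have "a0 * b0 = 0" by simp
    then have "a0 = 0 \<or> b0 = 0" by simp
    then show ?thesis using a0(2) b0(2) unfolding a1_def b1_def by auto
  qed
  show ?thesis unfolding is_prime_ideal_def P_def[symmetric] using PI ne prime by blast
qed


lemma nt_eq: fixes n t a b :: nat assumes "1 \<le> a" "n = a * t + b"
  shows "n - t + 1 = (a - 1) * t + b + 1"
proof -
  have "(a-1)*t = a*t - t" by (simp add: diff_mult_distrib)
  moreover have "t \<le> a*t" using assms(1) by simp
  ultimately show ?thesis using assms(2) by linarith
qed

lemma inc_mono:
  fixes i :: "nat \<Rightarrow> nat"
  assumes inc: "\<forall>j\<in>{1..<a}. i j < i (j+1)" and j: "1 \<le> j" and jd: "j + d \<le> (a::nat)"
  shows "i j + d \<le> i (j + d)"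
  using jd
proof (induction d)
  case 0 then show ?case by simp
next
  case (Suc d)
  then have "i j + d \<le> i (j + d)" by simp
  moreover have "i (j + d) < i (j + d + 1)" using inc Suc.prems j by auto
  ultimately show ?case by simp
qed

lemma inc_le:
  fixes i :: "nat \<Rightarrow> nat"
  assumes inc: "\<forall>j\<in>{1..<a}. i j < i (j+1)" and "1 \<le> j" "j \<le> j'" "j' \<le> (a::nat)"
  shows "i j \<le> i j'"
  using inc_mono[OF inc, of j "j' - j"] assms by simp

lemma inc_less:
  fixes i :: "nat \<Rightarrow> nat"
  assumes inc: "\<forall>j\<in>{1..<a}. i j < i (j+1)" and "1 \<le> j" "j < j'" "j' \<le> (a::nat)"
  shows "i j < i j'"
  using inc_mono[OF inc, of j "j' - j"] assms by simp

lemma comb_fwd: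
  fixes n t a b :: nat and i :: "nat \<Rightarrow> nat"
  assumes "1 \<le> t" and "t \<le> n"
    and "a = n div t" and "b = n mod t"
    and inc: "\<forall>j\<in>{1..<a}. i j < i (j+1)"
    and "1 \<le> i 1" and ia: "i a \<le> n"
    and cover: "\<forall>k\<in>{1..n-t+1}. \<exists>j\<in>{1..a}. k \<le> i j \<and> i j \<le> k + t - 1"
  shows "(\<forall>j\<in>{1..a}. (j-1)*t + b + 1 \<le> i j \<and> i j \<le> j*t)
        \<and> (\<forall>j\<in>{1..<a}. i (j+1) - i j \<le> t)"
proof -
  have nab: "n = a * t + b" using \<open>a = n div t\<close> \<open>b = n mod t\<close> by simp
  have a1: "1 \<le> a" proof -
    have "0 < n div t" using \<open>1 \<le> t\<close> \<open>t \<le> n\<close> by (simp add: div_greater_zero_iff)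
    then show ?thesis using \<open>a = n div t\<close> by simp
  qed
  have gap: "\<forall>j\<in>{1..<a}. i (j+1) - i j \<le> t"
  proof
    fix j assume j: "j \<in> {1..<a}"
    show "i (j+1) - i j \<le> t"
    proof (rule ccontr)
      assume "\<not> ?thesis"
      then have g: "i j + t < i (j+1)" by simp
      have "i (j+1) \<le> i a" using inc_le[OF inc, of "j+1" a] j by auto
      then have "i j + 1 \<in> {1..n-t+1}" using g ia by auto
      then obtain j' where j': "j' \<in> {1..a}" "i j + 1 \<le> i j'" "i j' \<le> i j + 1 + t - 1"
        using cover by blast
      show False
      proof (cases "j' \<le> j")
        case True
        then have "i j' \<le> i j" using inc_le[OF inc, of j' j] j j' by auto
        then show False using j' by simp
      next
        case False
        then have "i (j+1) \<le> i j'" using inc_le[OF inc, of "j+1" j'] j j' by auto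
        then show False using j' g by simp
      qed
    qed
  qed
  have i1: "i 1 \<le> t"
  proof -
    have "1 \<in> {1..n-t+1}" by simp
    then obtain j' where j': "j' \<in> {1..a}" "i j' \<le> 1 + t - 1" using cover by blast
    then have "i 1 \<le> i j'" using inc_le[OF inc, of 1 j'] by auto
    then show ?thesis using j' by simp
  qed
  have ian: "n - t + 1 \<le> i a"
  proof -
    have "n - t + 1 \<in> {1..n-t+1}" by simp
    then obtain j' where j': "j' \<in> {1..a}" "n - t + 1 \<le> i j'" using cover by blast
    then have "i j' \<le> i a" using inc_le[OF inc, of j' a] by auto
    then show ?thesis using j' by simp
  qed
  have up: "j + 1 \<le> a \<Longrightarrow> i (j+1) \<le> (j+1) * t" for j
  proof (induction j)
    case 0 then show ?case using i1 by simp
  next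
    case (Suc j)
    then have ih: "i (j+1) \<le> (j+1)*t" by simp
    have "j + 1 \<in> {1..<a}" using Suc.prems by simp
    then have "i (j+1+1) - i (j+1) \<le> t" using gap by blast
    then show ?case using ih by simp
  qed
  have down: "d < a \<Longrightarrow> i a \<le> i (a - d) + d * t" for d
  proof (induction d)
    case 0 then show ?case by simp
  next
    case (Suc d)
    then have h: "i a \<le> i (a - d) + d * t" by simp
    have "a - Suc d \<in> {1..<a}" using Suc.prems by auto
    then have "i (a - Suc d + 1) - i (a - Suc d) \<le> t" using gap by blast
    moreover have "a - Suc d + 1 = a - d" using Suc.prems by simp
    ultimately have "i (a - d) \<le> i (a - Suc d) + t" by simp
    then show ?case using h by simp
  qed
  have "\<forall>j\<in>{1..a}. (j-1)*t + b + 1 \<le> i j \<and> i j \<le> j*t"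
  proof
    fix j assume j: "j \<in> {1..a}"
    have jj: "j - 1 + 1 = j" using j by simp
    have "j - 1 + 1 \<le> a" using j by simp
    from up[OF this] have "i j \<le> j * t" unfolding jj .
    moreover have "(j-1)*t + b + 1 \<le> i j"
    proof -
      have "i a \<le> i (a - (a - j)) + (a - j) * t" using down[of "a - j"] j by auto
      then have h: "i a \<le> i j + (a - j) * t" using j by simp
      have e: "(a - 1) * t = (j - 1) * t + (a - j) * t" using j by (simp add: add_mult_distrib[symmetric])
      have "n - t + 1 = (a - 1) * t + b + 1" using nt_eq[OF a1 nab] .
      then show ?thesis using h ian e by linarith
    qed
    ultimately show "(j-1)*t + b + 1 \<le> i j \<and> i j \<le> j*t" by simp
  qed
  with gap show ?thesis by blast
qed

lemma comb_bwd:
  fixes n t a b :: nat and i :: "nat \<Rightarrow> nat"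
  assumes "1 \<le> t" and "t \<le> n"
    and "a = n div t" and "b = n mod t"
    and c1: "\<forall>j\<in>{1..a}. (j-1)*t + b + 1 \<le> i j \<and> i j \<le> j*t"
    and c2: "\<forall>j\<in>{1..<a}. i (j+1) - i j \<le> t"
    and k: "k \<in> {1..n-t+1}"
  shows "\<exists>j\<in>{1..a}. k \<le> i j \<and> i j \<le> k + t - 1"
proof -
  have nab: "n = a * t + b" using \<open>a = n div t\<close> \<open>b = n mod t\<close> by simp
  have a1: "1 \<le> a" proof -
    have "0 < n div t" using \<open>1 \<le> t\<close> \<open>t \<le> n\<close> by (simp add: div_greater_zero_iff)
    then show ?thesis using \<open>a = n div t\<close> by simp
  qed
  have "n - t + 1 = (a - 1) * t + b + 1" using nt_eq[OF a1 nab] .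
  then have ka: "k \<le> i a" using c1 a1 k by force
  define j0 where "j0 = (LEAST j. 1 \<le> j \<and> j \<le> a \<and> k \<le> i j)"
  have P: "1 \<le> j0 \<and> j0 \<le> a \<and> k \<le> i j0"
    unfolding j0_def by (rule LeastI[of _ a]) (use a1 ka in auto)
  show ?thesis
  proof (cases "j0 = 1")
    case True
    have a1': "1 \<in> {1..a}" using P by auto
    have "i 1 \<le> 1 * t" using c1 a1' by blast
    moreover have "k \<le> i 1" using P True by simp
    moreover have "1 \<le> k" using k by simp
    ultimately show ?thesis using a1' by (intro bexI[of _ 1]) auto
  next
    case False
    then have "\<not> (1 \<le> j0 - 1 \<and> j0 - 1 \<le> a \<and> k \<le> i (j0 - 1))"
      unfolding j0_def by (intro not_less_Least) (use P j0_def in auto)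
    then have "i (j0 - 1) < k" using P False by auto
    moreover have "j0 - 1 \<in> {1..<a}" using P False by auto
    with c2 have "i (j0 - 1 + 1) - i (j0 - 1) \<le> t" by blast
    ultimately show ?thesis using P False by (intro bexI[of _ j0]) auto
  qed
qed

lemma comb_win:
  fixes n t a b :: nat and i :: "nat \<Rightarrow> nat"
  assumes "1 \<le> t" and "t \<le> n"
    and "a = n div t" and "b = n mod t"
    and c1: "\<forall>j\<in>{1..a}. (j-1)*t + b + 1 \<le> i j \<and> i j \<le> j*t"
    and j: "j \<in> {1..a}"
  shows "\<exists>k\<in>{1..n-t+1}. \<forall>j'\<in>{1..a}. j' \<noteq> j \<longrightarrow> \<not> (k \<le> i j' \<and> i j' \<le> k + t - 1)"
proof -
  have nab: "n = a * t + b" using \<open>a = n div t\<close> \<open>b = n mod t\<close> by simp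
  have a1: "1 \<le> a" proof -
    have "0 < n div t" using \<open>1 \<le> t\<close> \<open>t \<le> n\<close> by (simp add: div_greater_zero_iff)
    then show ?thesis using \<open>a = n div t\<close> by simp
  qed
  have e: "n - t + 1 = (a - 1) * t + b + 1" using nt_eq[OF a1 nab] .
  have h: "(j - 1) * t \<le> (a - 1) * t" using j by (intro mult_le_mono1) auto
  have kin: "(j-1)*t + 1 \<in> {1..n-t+1}" unfolding atLeastAtMost_iff using h e by linarith
  have H: "\<forall>j'\<in>{1..a}. j' \<noteq> j \<longrightarrow> \<not> ((j-1)*t + 1 \<le> i j' \<and> i j' \<le> (j-1)*t + 1 + t - 1)"
  proof (intro ballI impI)
    fix j' assume j': "j' \<in> {1..a}" "j' \<noteq> j"
    show "\<not> ((j-1)*t + 1 \<le> i j' \<and> i j' \<le> (j-1)*t + 1 + t - 1)"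
    proof (cases "j' < j")
      case True
      then have m: "j' * t \<le> (j-1)*t" by (intro mult_le_mono1) auto
      have "i j' \<le> j' * t" using c1 j'(1) by blast
      then show ?thesis using m by linarith
    next
      case False
      then have "j \<le> j' - 1" using j' by simp
      then have m: "j * t \<le> (j'-1)*t" by (rule mult_le_mono1)
      have m2: "(j-1)*t + t = j * t" using j by (cases j) auto
      have "(j'-1)*t + b + 1 \<le> i j'" using c1 j'(1) by blast
      then show ?thesis using m m2 by linarith
    qed
  qed
  show ?thesis by (rule bexI[of _ "(j-1)*t + 1"]) (fact H, fact kin)
qed


theorem lemma3p3:
  fixes n t a b :: nat and i :: "nat \<Rightarrow> nat"
  assumes "1 \<le> t" and "t \<le> n"
    and "a = n div t" and "b = n mod t"
    and "\<forall>j\<in>{1..<a}. i j < i (j+1)"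
    and "1 \<le> i 1" and "i a \<le> n"
  shows "ideal_gen n (var ` i ` {1..a}) \<in> Ass n (path_ideal n t :: 'a::field mpoly set)
     \<longleftrightarrow> (\<forall>j\<in>{1..a}. (j-1)*t + b + 1 \<le> i j \<and> i j \<le> j*t)
        \<and> (\<forall>j\<in>{1..<a}. i (j+1) - i j \<le> t)"
proof -
  note t1 = \<open>1 \<le> t\<close> and tn = \<open>t \<le> n\<close> and ad = \<open>a = n div t\<close> and bm = \<open>b = n mod t\<close>
  note inc = \<open>\<forall>j\<in>{1..<a}. i j < i (j+1)\<close> and i1 = \<open>1 \<le> i 1\<close> and ia = \<open>i a \<le> n\<close>
  define V where "V = i ` {1..a}"
  define WI where "WI = (\<lambda>k. {k..k+t-1}) ` {1..n-t+1}"
  have Vsub: "V \<subseteq> {1..n}"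
  proof
    fix v assume "v \<in> V"
    then obtain j where j: "j \<in> {1..a}" "v = i j" unfolding V_def by blast
    have "i 1 \<le> i j" using inc_le[OF inc, of 1 j] j by auto
    moreover have "i j \<le> i a" using inc_le[OF inc, of j a] j by auto
    ultimately show "v \<in> {1..n}" using i1 ia j by auto
  qed
  have WIok: "\<forall>W\<in>WI. finite W \<and> W \<subseteq> {1..n}"
    unfolding WI_def using t1 tn by auto
  have I_eq: "path_ideal n t = (HJ n WI :: 'a mpoly set)"
  proof -
    have "(\<lambda>i. \<Prod>k\<in>{i..i+t-1}. var k) ` {1..n-t+1} = (\<lambda>W. Poly_Mapping.single (sqm W) (1::'a)) ` WI"
      unfolding WI_def image_image by (rule image_cong) (auto simp: prod_var)
    then show ?thesis unfolding path_ideal_def using ideal_char[OF WIok] by simp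
  qed
  have P_eq: "ideal_gen n (var ` i ` {1..a}) = (HJ n ((\<lambda>v. {v}) ` V) :: 'a mpoly set)"
  proof -
    have e: "var ` V = (\<lambda>W. Poly_Mapping.single (sqm W) (1::'a)) ` ((\<lambda>v. {v}) ` V)"
      unfolding image_image by (rule image_cong) (auto simp: var_def sqm_def)
    have "\<forall>W\<in>(\<lambda>v. {v}) ` V. finite W \<and> W \<subseteq> {1..n}" using Vsub by auto
    from ideal_char[OF this] e show ?thesis unfolding V_def by simp
  qed
  have Pc: "(HJ n ((\<lambda>v. {v}) ` V) :: 'a mpoly set) = {p \<in> polyS n. \<forall>m\<in>Poly_Mapping.keys p. Poly_Mapping.keys m \<inter> V \<noteq> {}}"
    by (rule HJ_single)
  have cover_iff: "(\<forall>W\<in>WI. W \<inter> V \<noteq> {}) \<longleftrightarrow> (\<forall>k\<in>{1..n-t+1}. \<exists>j\<in>{1..a}. k \<le> i j \<and> i j \<le> k + t - 1)"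
  proof
    assume H: "\<forall>W\<in>WI. W \<inter> V \<noteq> {}"
    show "\<forall>k\<in>{1..n-t+1}. \<exists>j\<in>{1..a}. k \<le> i j \<and> i j \<le> k + t - 1"
    proof
      fix k assume k: "k \<in> {1..n-t+1}"
      then have "{k..k+t-1} \<inter> V \<noteq> {}" using H unfolding WI_def by blast
      then obtain x where "x \<in> {k..k+t-1}" "x \<in> V" by blast
      then show "\<exists>j\<in>{1..a}. k \<le> i j \<and> i j \<le> k + t - 1" unfolding V_def by auto
    qed
  next
    assume H: "\<forall>k\<in>{1..n-t+1}. \<exists>j\<in>{1..a}. k \<le> i j \<and> i j \<le> k + t - 1"
    show "\<forall>W\<in>WI. W \<inter> V \<noteq> {}"
    proof
      fix W assume "W \<in> WI"
      then obtain k where k: "k \<in> {1..n-t+1}" "W = {k..k+t-1}" unfolding WI_def by blast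
      then obtain j where "j \<in> {1..a}" "k \<le> i j" "i j \<le> k+t-1" using H by blast
      then have "i j \<in> W \<inter> V" using k unfolding V_def by auto
      then show "W \<inter> V \<noteq> {}" by blast
    qed
  qed
  show ?thesis
  proof
    assume "ideal_gen n (var ` i ` {1..a}) \<in> Ass n (path_ideal n t :: 'a::field mpoly set)"
    then obtain f where f: "f \<in> polyS n" "(HJ n ((\<lambda>v. {v}) ` V) :: 'a mpoly set) = {g \<in> polyS n. g * f \<in> HJ n WI}"
      unfolding Ass_def P_eq I_eq by blast
    have "\<forall>W\<in>WI. W \<inter> V \<noteq> {}"
    proof
      fix W assume W: "W \<in> WI"
      let ?u = "Poly_Mapping.single (sqm W) (1::'a)"
      have uI: "?u \<in> HJ n WI" using gens_in_HJ[OF WIok] W by blast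
      have "?u \<in> polyS n" using uI by (simp add: HJ_def)
      moreover have "f * ?u \<in> HJ n WI" using HJ_ideal[of n WI] f(1) uI unfolding is_ideal_def by blast
      then have "?u * f \<in> HJ n WI" by (simp add: mult.commute)
      ultimately have "?u \<in> HJ n ((\<lambda>v. {v}) ` V)" using f(2) by blast
      then have "Poly_Mapping.keys (sqm W) \<inter> V \<noteq> {}" unfolding Pc by auto
      then show "W \<inter> V \<noteq> {}" using keys_sqm WIok W by auto
    qed
    then have "\<forall>k\<in>{1..n-t+1}. \<exists>j\<in>{1..a}. k \<le> i j \<and> i j \<le> k + t - 1" using cover_iff by blast
    from comb_fwd[OF t1 tn ad bm inc i1 ia this]
    show "(\<forall>j\<in>{1..a}. (j-1)*t + b + 1 \<le> i j \<and> i j \<le> j*t) \<and> (\<forall>j\<in>{1..<a}. i (j+1) - i j \<le> t)" .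
  next
    assume conds: "(\<forall>j\<in>{1..a}. (j-1)*t + b + 1 \<le> i j \<and> i j \<le> j*t) \<and> (\<forall>j\<in>{1..<a}. i (j+1) - i j \<le> t)"
    then have c1: "\<forall>j\<in>{1..a}. (j-1)*t + b + 1 \<le> i j \<and> i j \<le> j*t"
      and c2: "\<forall>j\<in>{1..<a}. i (j+1) - i j \<le> t" by auto
    have "\<forall>k\<in>{1..n-t+1}. \<exists>j\<in>{1..a}. k \<le> i j \<and> i j \<le> k + t - 1"
      using comb_bwd[OF t1 tn ad bm c1 c2] by blast
    then have cover: "\<forall>W\<in>WI. W \<inter> V \<noteq> {}" using cover_iff by blast
    define C where "C = {1..n} - V"
    have win: "\<forall>v\<in>V. \<exists>W\<in>WI. W \<subseteq> C \<union> {v}"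
    proof
      fix v assume "v \<in> V"
      then obtain j where j: "j \<in> {1..a}" "v = i j" unfolding V_def by blast
      obtain k where k: "k \<in> {1..n-t+1}" "\<forall>j'\<in>{1..a}. j' \<noteq> j \<longrightarrow> \<not> (k \<le> i j' \<and> i j' \<le> k + t - 1)"
        using comb_win[OF t1 tn ad bm c1 j(1)] by blast
      have kW: "{k..k+t-1} \<in> WI" unfolding WI_def using k(1) by blast
      then have "{k..k+t-1} \<subseteq> {1..n}" using WIok by blast
      moreover have "x = v" if "x \<in> {k..k+t-1}" "x \<in> V" for x
      proof -
        obtain j' where "j' \<in> {1..a}" "x = i j'" using \<open>x \<in> V\<close> unfolding V_def by blast
        then show ?thesis using k(2) that(1) j by (cases "j' = j") auto
      qed
      ultimately have "{k..k+t-1} \<subseteq> C \<union> {v}" unfolding C_def by blast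
      with kW show "\<exists>W\<in>WI. W \<subseteq> C \<union> {v}" by blast
    qed
    define f where "f = Poly_Mapping.single (sqm C) (1::'a)"
    have finC: "finite C" unfolding C_def by simp
    have kC: "Poly_Mapping.keys (sqm C) = C" by (rule keys_sqm[OF finC])
    have "Poly_Mapping.keys (sqm C) \<subseteq> {1..n}" using kC unfolding C_def by auto
    then have fS: "f \<in> polyS n" unfolding f_def by (rule polyS_single)
    have keysf: "Poly_Mapping.keys (g * f) = (\<lambda>m. m + sqm C) ` Poly_Mapping.keys g" for g :: "'a mpoly"
    proof
      show "Poly_Mapping.keys (g * f) \<subseteq> (\<lambda>m. m + sqm C) ` Poly_Mapping.keys g"
        using keys_mult[of g f] by (auto simp: f_def)
      show "(\<lambda>m. m + sqm C) ` Poly_Mapping.keys g \<subseteq> Poly_Mapping.keys (g * f)"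
        by (auto simp: f_def in_keys_iff lookup_mult_single)
    qed
    have key_m: "Poly_Mapping.keys (m + sqm C) = Poly_Mapping.keys m \<union> C" for m
      by (simp add: keys_add_nat keys_sqm[OF finC])
    have pw: "(Poly_Mapping.keys m \<inter> V \<noteq> {}) \<longleftrightarrow> (\<exists>W\<in>WI. W \<subseteq> Poly_Mapping.keys m \<union> C)" for m :: "nat \<Rightarrow>\<^sub>0 nat"
    proof
      assume "Poly_Mapping.keys m \<inter> V \<noteq> {}"
      then obtain v where v: "v \<in> Poly_Mapping.keys m" "v \<in> V" by blast
      then obtain W where "W \<in> WI" "W \<subseteq> C \<union> {v}" using win by blast
      then show "\<exists>W\<in>WI. W \<subseteq> Poly_Mapping.keys m \<union> C" using v by blast
    next
      assume "\<exists>W\<in>WI. W \<subseteq> Poly_Mapping.keys m \<union> C"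
      then obtain W where W: "W \<in> WI" "W \<subseteq> Poly_Mapping.keys m \<union> C" by blast
      then obtain x where "x \<in> W" "x \<in> V" using cover by blast
      then show "Poly_Mapping.keys m \<inter> V \<noteq> {}" using W unfolding C_def by blast
    qed
    have colon: "(HJ n ((\<lambda>v. {v}) ` V) :: 'a mpoly set) = {g \<in> polyS n. g * f \<in> HJ n WI}"
    proof (rule set_eqI)
      fix g :: "'a mpoly"
      show "g \<in> HJ n ((\<lambda>v. {v}) ` V) \<longleftrightarrow> g \<in> {g \<in> polyS n. g * f \<in> HJ n WI}"
      proof (cases "g \<in> polyS n")
        case False then show ?thesis unfolding Pc by auto
      next
        case True
        have gf: "g * f \<in> polyS n" using polyS_mult True fS by blast
        have "g * f \<in> HJ n WI \<longleftrightarrow> (\<forall>m\<in>Poly_Mapping.keys g. \<exists>W\<in>WI. W \<subseteq> Poly_Mapping.keys m \<union> C)"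
          unfolding HJ_def using gf by (simp add: keysf key_m)
        moreover have "g \<in> HJ n ((\<lambda>v. {v}) ` V) \<longleftrightarrow> (\<forall>m\<in>Poly_Mapping.keys g. Poly_Mapping.keys m \<inter> V \<noteq> {})"
          unfolding Pc using True by simp
        ultimately show ?thesis using pw True by auto
      qed
    qed
    have "is_prime_ideal n (HJ n ((\<lambda>v. {v}) ` V) :: 'a mpoly set)" by (rule prime_HJ)
    then show "ideal_gen n (var ` i ` {1..a}) \<in> Ass n (path_ideal n t :: 'a::field mpoly set)"
      unfolding Ass_def P_eq I_eq using fS colon by blast
  qed
qed

end
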